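(* Let $(u,v)\in k(x)^n\times k(x)^m$. There exist circuits $c_u\in\mathsf{ACirc}[0,n]$ and $c_v\in\mathsf{ACirc}[m,0]$ such that $[\![c_u]\!]=\{(\bullet,u)\}$ and $[\![c_v]\!]=\{(v,\bullet)\}$.
   Context: Fix a field $k$; $k(x)$ is the field of fractions of polynomials in $x$ over $k$. Circuits: terms built from generators with sorts $(n,m)$: copier $\Delta:(1,2)$, discard $!:(1,0)$, amplifier $\mathsf{s}_r:(1,1)$ ($r\in k$), register $\mathsf{x}:(1,1)$, adder $+:(2,1)$, zero $0:(0,1)$, one $\mathbf{1}:(0,1)$; mirror images $\Delta^{op}:(2,1)$, $!^{op}:(0,1)$, $\mathsf{s}_r^{op}$, $\mathsf{x}^{op}:(1,1)$, $+^{op}:(1,2)$, $0^{op}:(1,0)$, $\mathbf{1}^{op}:(1,0)$; $\mathrm{id}_0:(0,0),\mathrm{id}_1:(1,1),\mathrm{sw}:(2,2)$; closed under sequential composition $;$ and parallel composition $\oplus$. $\mathsf{ACirc}[n,m]$ is the set of circuits of sort $(n,m)$. Denotation: $[\![\Delta]\!]=\{(p,(p,p))\}$, $[\![!]\!]=\{(p,\bullet)\}$, $[\![+]\!]=\{((p,q),p+q)\}$, $[\![0]\!]=\{(\bullet,0)\}$, $[\![\mathbf 1]\!]=\{(\bullet,1)\}$, $[\![\mathsf s_r]\!]=\{(p,rp)\}$, $[\![\mathsf x]\!]=\{(p,px)\}$ ($\bullet$ the unique element of $k(x)^0$); mirrored generators denote converse relations; $\mathrm{id}_1,\mathrm{sw},\mathrm{id}_0$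 denote identity, swap, $\{(\bullet,\bullet)\}$; $;$ is relational composition and $\oplus$ product of relations. *)

theory Defs
  imports "HOL-Computational_Algebra.Polynomial" "HOL-Computational_Algebra.Fraction_Field"
begin

type_synonym 'k ratfun = "'k poly fract"

definition const_rf :: "'k::field \<Rightarrow> 'k ratfun" where
  "const_rf r = Fract [:r:] 1"

definition var_rf :: "'k::field ratfun" where
  "var_rf = Fract [:0, 1:] 1"

datatype 'k circ =
    Copy | Discard | Amp 'k | Reg | Add | Zero | One
  | CopyOp | DiscardOp | AmpOp 'k | RegOp | AddOp | ZeroOp | OneOp
  | Id0 | Id1 | Sw
  | Seq "'k circ" "'k circ"
  | Par "'k circ" "'k circ"

inductive has_sort :: "'k circ \<Rightarrow> nat \<Rightarrow> nat \<Rightarrow> bool" where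
  "has_sort Copy 1 2"
| "has_sort Discard 1 0"
| "has_sort (Amp r) 1 1"
| "has_sort Reg 1 1"
| "has_sort Add 2 1"
| "has_sort Zero 0 1"
| "has_sort One 0 1"
| "has_sort CopyOp 2 1"
| "has_sort DiscardOp 0 1"
| "has_sort (AmpOp r) 1 1"
| "has_sort RegOp 1 1"
| "has_sort AddOp 1 2"
| "has_sort ZeroOp 1 0"
| "has_sort OneOp 1 0"
| "has_sort Id0 0 0"
| "has_sort Id1 1 1"
| "has_sort Sw 2 2"
| "has_sort c n l \<Longrightarrow> has_sort d l m \<Longrightarrow> has_sort (Seq c d) n m"
| "has_sort c n m \<Longrightarrow> has_sort d n' m' \<Longrightarrow> has_sort (Par c d) (n + n') (m + m')"

definition ACirc :: "nat \<Rightarrow> nat \<Rightarrow> 'k circ set" where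
  "ACirc n m = {c. has_sort c n m}"

text \<open>Denotation: relations between k(x)^n and k(x)^m, vectors as lists
  (the empty list is the unique element of k(x)^0); mirrored generators denote the converse relations, written out explicitly.\<close>
fun den :: "'k::field circ \<Rightarrow> ('k ratfun list \<times> 'k ratfun list) set" where
  "den Copy = {([p], [p, p]) | p. True}"
| "den Discard = {([p], []) | p. True}"
| "den (Amp r) = {([p], [const_rf r * p]) | p. True}"
| "den Reg = {([p], [p * var_rf]) | p. True}"
| "den Add = {([p, q], [p + q]) | p q. True}"
| "den Zero = {([], [0])}"
| "den One = {([], [1])}"
| "den CopyOp = {([p, p], [p]) | p. True}"
| "den DiscardOp = {([], [p]) | p. True}"
| "den (AmpOp r) = {([const_rf r * p], [p]) | p. True}"
| "den RegOp = {([p * var_rf], [p]) | p. True}"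
| "den AddOp = {([p + q], [p, q]) | p q. True}"
| "den ZeroOp = {([0], [])}"
| "den OneOp = {([1], [])}"
| "den Id0 = {([], [])}"
| "den Id1 = {([p], [p]) | p. True}"
| "den Sw = {([p, q], [q, p]) | p q. True}"
| "den (Seq c d) = den c O den d"
| "den (Par c d) = {(xs @ xs', ys @ ys') | xs ys xs' ys'. (xs, ys) \<in> den c \<and> (xs', ys') \<in> den d}"

end

theory Submission
  imports Defs
begin

fun mirror :: "'k circ \<Rightarrow> 'k circ" where
  "mirror Copy = CopyOp" | "mirror Discard = DiscardOp" | "mirror (Amp r) = AmpOp r"
| "mirror Reg = RegOp" | "mirror Add = AddOp" | "mirror Zero = ZeroOp" | "mirror One = OneOp"
| "mirror CopyOp = Copy" | "mirror DiscardOp = Discard" | "mirror (AmpOp r) = Amp r"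
| "mirror RegOp = Reg" | "mirror AddOp = Add" | "mirror ZeroOp = Zero" | "mirror OneOp = One"
| "mirror Id0 = Id0" | "mirror Id1 = Id1" | "mirror Sw = Sw"
| "mirror (Seq c d) = Seq (mirror d) (mirror c)"
| "mirror (Par c d) = Par (mirror c) (mirror d)"

lemmas hsI = has_sort.intros has_sort.intros[unfolded One_nat_def]

lemma mirror_sort: "has_sort c n m \<Longrightarrow> has_sort (mirror c) m n"
  by (induction rule: has_sort.induct) (auto intro: hsI)

lemma mirror_den: "den (mirror c) = (den c)\<inverse>"
  by (induction c) (auto simp: converse_relcomp)

fun st :: "'k::field list \<Rightarrow> 'k circ" where
  "st [] = Zero"
| "st (c # cs) = Seq (Par (Seq One (Amp c)) (Seq (st cs) Reg)) Add"

fun mul :: "'k::field list \<Rightarrow> 'k circ" where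
  "mul [] = Seq Discard Zero"
| "mul (c # cs) = Seq Copy (Seq (Par (Amp c) (Seq (mul cs) Reg)) Add)"

lemma st_sort: "has_sort (st cs) 0 1"
proof (induction cs)
  case Nil then show ?case by (auto intro: hsI)
next
  case (Cons c cs)
  have a: "has_sort (Seq One (Amp c)) 0 1" by (rule hsI(18)[of _ _ 1]) (rule hsI)+
  have b: "has_sort (Seq (st cs) Reg) 0 1" by (rule hsI(18)[of _ _ 1]) (rule Cons, rule hsI)
  have P: "has_sort (Par (Seq One (Amp c)) (Seq (st cs) Reg)) 0 2"
    using hsI(19)[OF a b] by (simp add: numeral_2_eq_2)
  show ?case using hsI(18)[OF P hsI(5)] by simp
qed

lemma mul_sort: "has_sort (mul cs) 1 1"
proof (induction cs)
  case Nil then show ?case by (auto intro: hsI)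
next
  case (Cons c cs)
  have b: "has_sort (Seq (mul cs) Reg) 1 1" by (rule hsI(18)[of _ _ 1]) (rule Cons, rule hsI)
  have P: "has_sort (Par (Amp c) (Seq (mul cs) Reg)) 2 2"
    using hsI(19)[OF hsI(3)[of c] b] by (simp add: numeral_2_eq_2)
  have Q: "has_sort (Seq (Par (Amp c) (Seq (mul cs) Reg)) Add) 2 1"
    using hsI(18)[OF P hsI(5)] by simp
  show ?case using hsI(18)[OF hsI(1) Q] by simp
qed

lemma pcons_fract: "Fract (pCons c p) 1 = const_rf c + Fract p 1 * var_rf"
proof -
  have "pCons c p = [:c:] + p * [:0,1:]"
    by simp
  then show ?thesis by (simp add: const_rf_def var_rf_def)
qed

lemma st_den: "den (st cs) = {([], [Fract (Poly cs) 1])}"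
proof (induction cs)
  case Nil then show ?case by (simp add: fract_collapse)
next
  case (Cons c cs)
  show ?case using Cons by (auto simp: pcons_fract relcomp_unfold fract_collapse)
qed

lemma parI: "(xs, ys) \<in> den c \<Longrightarrow> (xs', ys') \<in> den d \<Longrightarrow> (xs @ xs', ys @ ys') \<in> den (Par c d)"
  by auto

lemma mul_den: "den (mul cs) = {([p], [Fract (Poly cs) 1 * p]) | p. True}"
proof (induction cs)
  case Nil then show ?case by (auto simp: relcomp_unfold fract_collapse)
next
  case (Cons c cs)
  show ?case
  proof (rule set_eqI, rule iffI)
    fix z assume "z \<in> den (mul (c # cs))"
    then show "z \<in> {([p], [Fract (Poly (c # cs)) 1 * p]) | p. True}"
      using Cons by (auto simp: pcons_fract relcomp_unfold algebra_simps)
  next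
    fix z assume "z \<in> {([p], [Fract (Poly (c # cs)) 1 * p]) | p. True}"
    then obtain p where z: "z = ([p], [Fract (Poly (c # cs)) 1 * p])" by blast
    let ?F = "Fract (Poly cs) 1"
    have 1: "([p], [p, p]) \<in> den Copy" by simp
    have 2: "([p], [?F * p]) \<in> den (mul cs)" using Cons by auto
    have 3: "([p], [?F * p * var_rf]) \<in> den (Seq (mul cs) Reg)" using 2 by auto
    have 4: "([p] @ [p], [const_rf c * p] @ [?F * p * var_rf]) \<in> den (Par (Amp c) (Seq (mul cs) Reg))"
      by (rule parI) (use 3 in auto)
    have 5: "([const_rf c * p, ?F * p * var_rf], [Fract (Poly (c # cs)) 1 * p]) \<in> den Add"
      by (auto simp: pcons_fract algebra_simps)
    have h4: "([p, p], [const_rf c * p, ?F * p * var_rf]) \<in> den (Par (Amp c) (Seq (mul cs) Reg))"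
      using 4 by simp
    have "([p], [Fract (Poly (c # cs)) 1 * p]) \<in> den Copy O (den (Par (Amp c) (Seq (mul cs) Reg)) O den Add)"
      by (rule relcompI[OF 1 relcompI[OF h4 5]])
    then show "z \<in> den (mul (c # cs))" unfolding z by (simp only: mul.simps den.simps)
  qed
qed

lemma div_char:
  fixes f q :: "'k::field ratfun"
  assumes "f = Fract a b" "b \<noteq> 0"
  shows "Fract b 1 * q = Fract a 1 \<longleftrightarrow> q = f"
proof -
  have nz: "Fract b 1 \<noteq> 0" using assms(2) by (simp add: Zero_fract_def eq_fract)
  have "f = Fract a 1 / Fract b 1" using assms by (simp add: divide_fract)
  moreover have "\<And>x y q :: 'k ratfun. y \<noteq> 0 \<Longrightarrow> y * q = x \<longleftrightarrow> q = x / y"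
    by (auto simp: field_simps)
  ultimately show ?thesis using nz by metis
qed

lemma state_ex: "\<exists>c. has_sort c 0 1 \<and> den c = {([], [f::'k::field ratfun])}"
proof -
  obtain a b where ab: "f = Fract a b" "b \<noteq> 0" by (cases f) auto
  let ?c = "Seq (st (coeffs a)) (mirror (mul (coeffs b)))"
  have srt: "has_sort ?c 0 1" by (rule hsI(18)[OF st_sort mirror_sort[OF mul_sort]])
  have "den ?c = {([], [q]) | q. Fract b 1 * q = Fract a 1}"
    by (auto simp: st_den mirror_den mul_den)
  moreover have "{([], [q]) | q. Fract b 1 * q = Fract a 1} = {([], [f])}"
    using div_char[OF ab] by auto
  ultimately have "den ?c = {([], [f])}" by simp
  then show ?thesis using srt by blast
qed

lemma costate_ex: "\<exists>c. has_sort c 1 0 \<and> den c = {([f::'k::field ratfun], [])}"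
proof -
  obtain a b where ab: "f = Fract a b" "b \<noteq> 0" by (cases f) auto
  let ?c = "Seq (mul (coeffs b)) (mirror (st (coeffs a)))"
  have srt: "has_sort ?c 1 0" by (rule hsI(18)[OF mul_sort mirror_sort[OF st_sort]])
  have "den ?c = {([q], []) | q. Fract b 1 * q = Fract a 1}"
    by (auto simp: st_den mirror_den mul_den)
  moreover have "{([q], []) | q. Fract b 1 * q = Fract a 1} = {([f], [])}"
    using div_char[OF ab] by auto
  ultimately have "den ?c = {([f], [])}" by simp
  then show ?thesis using srt by blast
qed

lemma states_ex: "\<exists>c. has_sort c 0 (length u) \<and> den c = {([], u::'k::field ratfun list)}"
proof (induction u)
  case Nil then show ?case by (intro exI[of _ Id0]) (auto intro: hsI)
next
  case (Cons f u)
  then obtain d where d: "has_sort d 0 (length u)" "den d = {([], u)}" by blast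
  obtain c where c: "has_sort c 0 1" "den c = {([], [f])}" using state_ex by blast
  have "has_sort (Par c d) (0 + 0) (1 + length u)" by (rule hsI(19)[OF c(1) d(1)])
  moreover have "den (Par c d) = {([], f # u)}" using c d by auto
  ultimately show ?case by auto
qed

lemma costates_ex: "\<exists>c. has_sort c (length v) 0 \<and> den c = {(v::'k::field ratfun list, [])}"
proof (induction v)
  case Nil then show ?case by (intro exI[of _ Id0]) (auto intro: hsI)
next
  case (Cons f u)
  then obtain d where d: "has_sort d (length u) 0" "den d = {(u, [])}" by blast
  obtain c where c: "has_sort c 1 0" "den c = {([f], [])}" using costate_ex by blast
  have "has_sort (Par c d) (1 + length u) (0 + 0)" by (rule hsI(19)[OF c(1) d(1)])
  moreover have "den (Par c d) = {(f # u, [])}" using c d by auto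
  ultimately show ?case by auto
qed

theorem proposition2:
  fixes u v :: "'k::field ratfun list"
  assumes "length u = n" and "length v = m"
  shows "\<exists>cu \<in> ACirc 0 n. \<exists>cv \<in> ACirc m 0. den cu = {([], u)} \<and> den cv = {(v, [])}"
  using states_ex[of u] costates_ex[of v] assms by (auto simp: ACirc_def)

end
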